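(* Let $y_1,y_2,y_3>0$ with $y_1=4y_2y_3$, let $g=y_1Q|_{\mathfrak m_1}+y_2Q|_{\mathfrak m_2}+y_3Q|_{\mathfrak m_3}$ with orthonormal basis $X_1,\dots,X_7$, and consider the $\mathrm{SO}(5)$-invariant tensors on $V^{5,2}$ given by $\xi=X_1$, $\eta=X^1$, and the endomorphism $\Phi$ of $\mathfrak m$ with $\Phi X_1=0$, $\Phi X_i=-X_{i+3}$, $\Phi X_{i+3}=X_i$ for $i=2,3,4$. Then $(\eta,\xi,g,\Phi)$, which is a contact metric structure, is a Sasakian structure if and only if $y_1=4y_2^2$ and $y_2=y_3$.
   Context: Basis of $\mathfrak{so}(5)$ (with $E_{ij}$ the elementary $5\times5$ matrices): $e_1=E_{12}-E_{21}$, $e_2=E_{13}-E_{31}$, $e_3=E_{14}-E_{41}$, $e_4=E_{15}-E_{51}$, $e_5=E_{23}-E_{32}$, $e_6=E_{24}-E_{42}$, $e_7=E_{25}-E_{52}$, $e_8=E_{34}-E_{43}$, $e_9=E_{35}-E_{53}$, $e_{10}=E_{54}-E_{45}$; bracket = commutator. $V^{5,2}=\mathrm{SO}(5)/\mathrm{SO}(3)$ with $\mathrm{Lie}(\mathrm{SO}(3))=\mathrm{span}\{e_8,e_9,e_{10}\}$; $\mathfrak m=\mathrm{span}\{e_1,\dots,e_7\}$ is identified with the tangent space at the origin and invariant tensors with $\mathrm{Ad}(\mathrm{SO}(3))$-invariant tensors on $\mathfrak m$. $Q(A,B)=\frac12\mathrm{tr}(AB^T)$; $\mathfrak m_1=\mathrm{span}\{e_1\}$,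 $\mathfrak m_2=\mathrm{span}\{e_2,e_3,e_4\}$, $\mathfrak m_3=\mathrm{span}\{e_5,e_6,e_7\}$, mutually $g$-orthogonal. $X_1=e_1/\sqrt{y_1}$, $X_i=e_i/\sqrt{y_2}$ ($i=2,3,4$), $X_i=e_i/\sqrt{y_3}$ ($i=5,6,7$), with dual coframe $X^i$. A contact metric structure $(\eta,\xi,g,\Phi)$ satisfies $\eta\wedge(d\eta)^3\neq0$, $\eta(\xi)=1$, $\Phi^2=-I+\eta\otimes\xi$, $g(\Phi X,\Phi Y)=g(X,Y)-\eta(X)\eta(Y)$, $d\eta(X,Y)=2g(X,\Phi Y)$. It is Sasakian if it is normal, i.e. the Nijenhuis tensor $N_\Phi(X,Y)=[\Phi X,\Phi Y]+\Phi^2[X,Y]-\Phi[\Phi X,Y]-\Phi[X,\Phi Y]$ satisfies $N_\Phi=-d\eta\otimes\xi$. *)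

theory Defs
  imports Complex_Main "HOL-Combinatorics.Permutations"
begin

text \<open>5x5 real matrices, indexed by 1..5 (entries outside this range are irrelevant and
  are zero for all matrices built below).\<close>
type_synonym mat = "nat \<Rightarrow> nat \<Rightarrow> real"

definition mzero :: mat where "mzero = (\<lambda>i j. 0)"
definition madd :: "mat \<Rightarrow> mat \<Rightarrow> mat" where "madd A B = (\<lambda>i j. A i j + B i j)"
definition msub :: "mat \<Rightarrow> mat \<Rightarrow> mat" where "msub A B = (\<lambda>i j. A i j - B i j)"
definition msc :: "real \<Rightarrow> mat \<Rightarrow> mat" where "msc c A = (\<lambda>i j. c * A i j)"
definition mmul :: "mat \<Rightarrow> mat \<Rightarrow> mat" where
  "mmul A B = (\<lambda>i j. \<Sum>k\<in>{1..5}. A i k * B k j)"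
definition mtrans :: "mat \<Rightarrow> mat" where "mtrans A = (\<lambda>i j. A j i)"
definition mtrace :: "mat \<Rightarrow> real" where "mtrace A = (\<Sum>i\<in>{1..5}. A i i)"

definition Eij :: "nat \<Rightarrow> nat \<Rightarrow> mat" where
  "Eij p q = (\<lambda>i j. if i = p \<and> j = q then 1 else 0)"

definition commut :: "mat \<Rightarrow> mat \<Rightarrow> mat" where
  "commut A B = msub (mmul A B) (mmul B A)"

definition so5_e :: "nat \<Rightarrow> mat" where
  "so5_e k =
    (if k = 1 then msub (Eij 1 2) (Eij 2 1)
     else if k = 2 then msub (Eij 1 3) (Eij 3 1)
     else if k = 3 then msub (Eij 1 4) (Eij 4 1)
     else if k = 4 then msub (Eij 1 5) (Eij 5 1)
     else if k = 5 then msub (Eij 2 3) (Eij 3 2)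
     else if k = 6 then msub (Eij 2 4) (Eij 4 2)
     else if k = 7 then msub (Eij 2 5) (Eij 5 2)
     else if k = 8 then msub (Eij 3 4) (Eij 4 3)
     else if k = 9 then msub (Eij 3 5) (Eij 5 3)
     else if k = 10 then msub (Eij 5 4) (Eij 4 5)
     else mzero)"

definition Qf :: "mat \<Rightarrow> mat \<Rightarrow> real" where
  "Qf A B = mtrace (mmul A (mtrans B)) / 2"

text \<open>Q-orthogonal projection onto span of e_k, k in S (the e_k are Q-orthonormal).\<close>
definition proj_span :: "nat set \<Rightarrow> mat \<Rightarrow> mat" where
  "proj_span S A = (\<lambda>i j. \<Sum>k\<in>S. Qf A (so5_e k) * so5_e k i j)"

text \<open>m = span{e_1..e_7}, identified with the tangent space of V^{5,2} = SO(5)/SO(3)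
  at the origin; the reductive complement of so(3) = span{e_8,e_9,e_10}.\<close>
definition m_space :: "mat set" where
  "m_space = {A. \<exists>c :: nat \<Rightarrow> real. A = (\<lambda>i j. \<Sum>k\<in>{1..7}. c k * so5_e k i j)}"

definition proj_m :: "mat \<Rightarrow> mat" where "proj_m = proj_span {1..7}"

text \<open>The m-component of the Lie bracket, used to evaluate invariant tensors at the origin.\<close>
definition brm :: "mat \<Rightarrow> mat \<Rightarrow> mat" where "brm A B = proj_m (commut A B)"

definition g_met :: "real \<Rightarrow> real \<Rightarrow> real \<Rightarrow> mat \<Rightarrow> mat \<Rightarrow> real" where
  "g_met y1 y2 y3 A B =
     y1 * Qf (proj_span {1} A) (proj_span {1} B)
   + y2 * Qf (proj_span {2,3,4} A) (proj_span {2,3,4} B)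
   + y3 * Qf (proj_span {5,6,7} A) (proj_span {5,6,7} B)"

definition blk :: "real \<Rightarrow> real \<Rightarrow> real \<Rightarrow> nat \<Rightarrow> real" where
  "blk y1 y2 y3 k = (if k = 1 then y1 else if k \<in> {2,3,4} then y2 else y3)"

definition Xb :: "real \<Rightarrow> real \<Rightarrow> real \<Rightarrow> nat \<Rightarrow> mat" where
  "Xb y1 y2 y3 k = msc (1 / sqrt (blk y1 y2 y3 k)) (so5_e k)"

definition Xco :: "real \<Rightarrow> real \<Rightarrow> real \<Rightarrow> nat \<Rightarrow> mat \<Rightarrow> real" where
  "Xco y1 y2 y3 k A = sqrt (blk y1 y2 y3 k) * Qf A (so5_e k)"

definition Phi_img :: "real \<Rightarrow> real \<Rightarrow> real \<Rightarrow> nat \<Rightarrow> mat" where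
  "Phi_img y1 y2 y3 k =
     (if k \<in> {2,3,4} then msc (-1) (Xb y1 y2 y3 (k + 3))
      else if k \<in> {5,6,7} then Xb y1 y2 y3 (k - 3)
      else mzero)"

definition Phi_V :: "real \<Rightarrow> real \<Rightarrow> real \<Rightarrow> mat \<Rightarrow> mat" where
  "Phi_V y1 y2 y3 A = (\<lambda>i j. \<Sum>k\<in>{1..7}. Xco y1 y2 y3 k A * Phi_img y1 y2 y3 k i j)"

definition eta_V :: "real \<Rightarrow> real \<Rightarrow> real \<Rightarrow> mat \<Rightarrow> real" where
  "eta_V y1 y2 y3 = Xco y1 y2 y3 1"

definition xi_V :: "real \<Rightarrow> real \<Rightarrow> real \<Rightarrow> mat" where
  "xi_V y1 y2 y3 = Xb y1 y2 y3 1"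

text \<open>Exterior derivative of an invariant 1-form, evaluated at the origin, with the
  convention d eta(X,Y) = X eta(Y) - Y eta(X) - eta([X,Y]).\<close>
definition d_form :: "(mat \<Rightarrow> mat \<Rightarrow> mat) \<Rightarrow> (mat \<Rightarrow> real) \<Rightarrow> mat \<Rightarrow> mat \<Rightarrow> real" where
  "d_form br eta X Y = - eta (br X Y)"

text \<open>(eta \<and> (d eta)^3)(v_1,...,v_7), up to a nonzero normalising constant.\<close>
definition eta_wedge_deta3 ::
  "(mat \<Rightarrow> mat \<Rightarrow> mat) \<Rightarrow> (mat \<Rightarrow> real) \<Rightarrow> (nat \<Rightarrow> mat) \<Rightarrow> real" where
  "eta_wedge_deta3 br eta v =
     (\<Sum>p | p permutes {1..7}. of_int (sign p) * eta (v (p 1))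
        * d_form br eta (v (p 2)) (v (p 3))
        * d_form br eta (v (p 4)) (v (p 5))
        * d_form br eta (v (p 6)) (v (p 7)))"

definition contact_metric ::
  "mat set \<Rightarrow> (mat \<Rightarrow> mat \<Rightarrow> mat) \<Rightarrow> (mat \<Rightarrow> real) \<Rightarrow> mat \<Rightarrow> (mat \<Rightarrow> mat \<Rightarrow> real)
   \<Rightarrow> (mat \<Rightarrow> mat) \<Rightarrow> bool" where
  "contact_metric M br eta xi g Phi \<longleftrightarrow>
     (\<exists>v. (\<forall>i. v i \<in> M) \<and> eta_wedge_deta3 br eta v \<noteq> 0)
   \<and> xi \<in> M \<and> eta xi = 1
   \<and> (\<forall>X\<in>M. Phi X \<in> M \<and> Phi (Phi X) = madd (msc (-1) X) (msc (eta X) xi))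
   \<and> (\<forall>X\<in>M. \<forall>Y\<in>M. g (Phi X) (Phi Y) = g X Y - eta X * eta Y)
   \<and> (\<forall>X\<in>M. \<forall>Y\<in>M. d_form br eta X Y = 2 * g X (Phi Y))"

definition nijenhuis :: "(mat \<Rightarrow> mat \<Rightarrow> mat) \<Rightarrow> (mat \<Rightarrow> mat) \<Rightarrow> mat \<Rightarrow> mat \<Rightarrow> mat" where
  "nijenhuis br Phi X Y =
     msub (msub (madd (br (Phi X) (Phi Y)) (Phi (Phi (br X Y))))
                (Phi (br (Phi X) Y)))
          (Phi (br X (Phi Y)))"

definition normal_structure ::
  "mat set \<Rightarrow> (mat \<Rightarrow> mat \<Rightarrow> mat) \<Rightarrow> (mat \<Rightarrow> real) \<Rightarrow> mat \<Rightarrow> (mat \<Rightarrow> mat) \<Rightarrow> bool" where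
  "normal_structure M br eta xi Phi \<longleftrightarrow>
     (\<forall>X\<in>M. \<forall>Y\<in>M. nijenhuis br Phi X Y = msc (- d_form br eta X Y) xi)"

definition sasakian ::
  "mat set \<Rightarrow> (mat \<Rightarrow> mat \<Rightarrow> mat) \<Rightarrow> (mat \<Rightarrow> real) \<Rightarrow> mat \<Rightarrow> (mat \<Rightarrow> mat \<Rightarrow> real)
   \<Rightarrow> (mat \<Rightarrow> mat) \<Rightarrow> bool" where
  "sasakian M br eta xi g Phi \<longleftrightarrow>
     contact_metric M br eta xi g Phi \<and> normal_structure M br eta xi Phi"

end

theory Submission
  imports Defs
begin

declare One_nat_def[simp del]

lemma set17: "{1..7::nat} = {1,2,3,4,5,6,7}" by auto
lemma set15: "{1..5::nat} = {1,2,3,4,5}" by auto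

definition mk :: "(nat \<Rightarrow> real) \<Rightarrow> mat" where
  "mk c = (\<lambda>i j. \<Sum>k\<in>{1..7}. c k * so5_e k i j)"

lemma so5_app:
  "so5_e 1 i j = (if i = 1 \<and> j = 2 then 1 else if i = 2 \<and> j = 1 then -1 else 0)"
  "so5_e 2 i j = (if i = 1 \<and> j = 3 then 1 else if i = 3 \<and> j = 1 then -1 else 0)"
  "so5_e 3 i j = (if i = 1 \<and> j = 4 then 1 else if i = 4 \<and> j = 1 then -1 else 0)"
  "so5_e 4 i j = (if i = 1 \<and> j = 5 then 1 else if i = 5 \<and> j = 1 then -1 else 0)"
  "so5_e 5 i j = (if i = 2 \<and> j = 3 then 1 else if i = 3 \<and> j = 2 then -1 else 0)"
  "so5_e 6 i j = (if i = 2 \<and> j = 4 then 1 else if i = 4 \<and> j = 2 then -1 else 0)"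
  "so5_e 7 i j = (if i = 2 \<and> j = 5 then 1 else if i = 5 \<and> j = 2 then -1 else 0)"
  "so5_e 8 i j = (if i = 3 \<and> j = 4 then 1 else if i = 4 \<and> j = 3 then -1 else 0)"
  "so5_e 9 i j = (if i = 3 \<and> j = 5 then 1 else if i = 5 \<and> j = 3 then -1 else 0)"
  "so5_e 10 i j = (if i = 5 \<and> j = 4 then 1 else if i = 4 \<and> j = 5 then -1 else 0)"
  by (auto simp: so5_e_def msub_def Eij_def)

lemma mk_app: "mk c i j = c 1 * so5_e 1 i j + c 2 * so5_e 2 i j + c 3 * so5_e 3 i j + c 4 * so5_e 4 i j
   + c 5 * so5_e 5 i j + c 6 * so5_e 6 i j + c 7 * so5_e 7 i j"
  by (simp add: mk_def set17)

lemma mk_ent: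
  "mk c 1 1 = 0"
  "mk c 1 2 = c 1"
  "mk c 1 3 = c 2"
  "mk c 1 4 = c 3"
  "mk c 1 5 = c 4"
  "mk c 2 1 = - c 1"
  "mk c 2 2 = 0"
  "mk c 2 3 = c 5"
  "mk c 2 4 = c 6"
  "mk c 2 5 = c 7"
  "mk c 3 1 = - c 2"
  "mk c 3 2 = - c 5"
  "mk c 3 3 = 0"
  "mk c 3 4 = 0"
  "mk c 3 5 = 0"
  "mk c 4 1 = - c 3"
  "mk c 4 2 = - c 6"
  "mk c 4 3 = 0"
  "mk c 4 4 = 0"
  "mk c 4 5 = 0"
  "mk c 5 1 = - c 4"
  "mk c 5 2 = - c 7"
  "mk c 5 3 = 0"
  "mk c 5 4 = 0"
  "mk c 5 5 = 0"
  by (simp_all add: mk_app so5_app)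

lemma k17: "k \<in> {1..7::nat} \<Longrightarrow> k = 1 \<or> k = 2 \<or> k = 3 \<or> k = 4 \<or> k = 5 \<or> k = 6 \<or> k = 7"
  by auto

lemma Qf_app: "Qf A B = (\<Sum>i\<in>{1..5}. \<Sum>k\<in>{1..5}. A i k * B i k) / 2"
  by (simp add: Qf_def mtrace_def mmul_def mtrans_def)

lemma Qf_e:
  "Qf A (so5_e 1) = (A 1 2 - A 2 1) / 2"
  "Qf A (so5_e 2) = (A 1 3 - A 3 1) / 2"
  "Qf A (so5_e 3) = (A 1 4 - A 4 1) / 2"
  "Qf A (so5_e 4) = (A 1 5 - A 5 1) / 2"
  "Qf A (so5_e 5) = (A 2 3 - A 3 2) / 2"
  "Qf A (so5_e 6) = (A 2 4 - A 4 2) / 2"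
  "Qf A (so5_e 7) = (A 2 5 - A 5 2) / 2"
  by (simp_all add: Qf_app set15 so5_app)

lemma Qf_mk: "k \<in> {1..7} \<Longrightarrow> Qf (mk c) (so5_e k) = c k"
  by (drule k17) (elim disjE; simp add: Qf_e mk_ent)

lemma mk_cong: "(\<And>k. k \<in> {1..7} \<Longrightarrow> c k = d k) \<Longrightarrow> mk c = mk d"
  unfolding mk_def by (intro ext sum.cong) auto

lemma mk_eq_iff: "mk c = mk d \<longleftrightarrow> (\<forall>k\<in>{1..7}. c k = d k)"
proof
  assume "mk c = mk d"
  then have h: "Qf (mk c) (so5_e k) = Qf (mk d) (so5_e k)" for k by simp
  show "\<forall>k\<in>{1..7}. c k = d k"
  proof
    fix k :: nat assume k: "k \<in> {1..7}"
    show "c k = d k" using Qf_mk[OF k, of c] Qf_mk[OF k, of d] h[of k] by simp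
  qed
next
  assume "\<forall>k\<in>{1..7}. c k = d k"
  then show "mk c = mk d" by (intro mk_cong) blast
qed

lemma madd_mk: "madd (mk c) (mk d) = mk (\<lambda>k. c k + d k)"
  by (simp add: madd_def mk_def sum.distrib[symmetric] distrib_right)
lemma msc_mk: "msc a (mk c) = mk (\<lambda>k. a * c k)"
  by (simp add: msc_def mk_def sum_distrib_left mult.assoc)
lemma mzero_mk: "mzero = mk (\<lambda>k. 0)"
  by (simp add: mzero_def mk_def)
lemma so5_mk: "k \<in> {1..7} \<Longrightarrow> so5_e k = mk (\<lambda>l. if l = k then 1 else 0)"
proof (intro ext)
  fix i j assume k: "k \<in> {1..7}"
  have "mk (\<lambda>l. if l = k then 1 else 0) i j = (\<Sum>l\<in>{1..7}. if l = k then so5_e l i j else 0)"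
    unfolding mk_def by (rule sum.cong) simp_all
  also have "\<dots> = so5_e k i j" using k by (simp only: sum.delta finite_atLeastAtMost if_True)
  finally show "so5_e k i j = mk (\<lambda>l. if l = k then 1 else 0) i j" by simp
qed

lemma proj_mk: "S \<subseteq> {1..7} \<Longrightarrow> proj_span S A = mk (\<lambda>k. if k \<in> S then Qf A (so5_e k) else 0)"
  unfolding proj_span_def mk_def
  by (intro ext sum.mono_neutral_cong_left) auto

lemma Qf_mk_mk: "Qf (mk c) (mk d) = c 1 * d 1 + c 2 * d 2 + c 3 * d 3 + c 4 * d 4 + c 5 * d 5 + c 6 * d 6 + c 7 * d 7"
  by (simp add: Qf_app set15 mk_ent)

lemma m_space_mk: "m_space = range mk"
  unfolding m_space_def mk_def by auto

definition brc :: "(nat \<Rightarrow> real) \<Rightarrow> (nat \<Rightarrow> real) \<Rightarrow> nat \<Rightarrow> real" where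
  "brc c d k = (if k = 1 then -(c 2 * d 5 - c 5 * d 2) - (c 3 * d 6 - c 6 * d 3) - (c 4 * d 7 - c 7 * d 4)
    else if k = 2 then c 1 * d 5 - c 5 * d 1
    else if k = 3 then c 1 * d 6 - c 6 * d 1
    else if k = 4 then c 1 * d 7 - c 7 * d 1
    else if k = 5 then -(c 1 * d 2 - c 2 * d 1)
    else if k = 6 then -(c 1 * d 3 - c 3 * d 1)
    else if k = 7 then -(c 1 * d 4 - c 4 * d 1) else 0)"

lemma brm_mk: "brm (mk c) (mk d) = mk (brc c d)"
proof -
  have "brm (mk c) (mk d) = mk (\<lambda>k. if k \<in> {1..7} then Qf (commut (mk c) (mk d)) (so5_e k) else 0)"
    unfolding brm_def proj_m_def by (rule proj_mk) simp
  also have "\<dots> = mk (brc c d)"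
  proof (rule mk_cong)
    fix k :: nat assume "k \<in> {1..7}"
    then show "(if k \<in> {1..7} then Qf (commut (mk c) (mk d)) (so5_e k) else 0) = brc c d k"
      by (drule_tac k17) (elim disjE; simp add: Qf_e commut_def msub_def mmul_def set15 mk_ent brc_def algebra_simps; simp add: field_simps)
  qed
  finally show ?thesis .
qed


lemma msub_mk: "msub (mk c) (mk d) = mk (\<lambda>k. c k - d k)"
  by (simp add: msub_def mk_def sum_subtractf[symmetric] left_diff_distrib)

definition phic :: "real \<Rightarrow> real \<Rightarrow> (nat \<Rightarrow> real) \<Rightarrow> nat \<Rightarrow> real" where
  "phic a b c k = (if k \<in> {2,3,4} then (b / a) * c (k + 3)
     else if k \<in> {5,6,7} then - (a / b) * c (k - 3) else 0)"

lemma Xco_mk: "k \<in> {1..7} \<Longrightarrow> Xco y1 y2 y3 k (mk c) = sqrt (blk y1 y2 y3 k) * c k"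
  by (simp add: Xco_def Qf_mk)

lemma Phi_mk: "Phi_V y1 y2 y3 (mk c) = mk (phic (sqrt y2) (sqrt y3) c)"
proof (intro ext)
  fix i j
  show "Phi_V y1 y2 y3 (mk c) i j = mk (phic (sqrt y2) (sqrt y3) c) i j"
    by (simp add: Phi_V_def set17 Xco_mk blk_def Phi_img_def Xb_def msc_def mzero_def phic_def mk_app algebra_simps)
qed

lemma eta_mk: "eta_V y1 y2 y3 (mk c) = sqrt y1 * c 1"
  by (simp add: eta_V_def Xco_mk blk_def)

lemma xi_mk: "xi_V y1 y2 y3 = mk (\<lambda>k. if k = 1 then 1 / sqrt y1 else 0)"
  by (simp add: xi_V_def Xb_def blk_def so5_mk msc_mk if_distrib cong: if_cong)

lemma g_mk: "g_met y1 y2 y3 (mk c) (mk d) = y1 * (c 1 * d 1) + y2 * (c 2 * d 2 + c 3 * d 3 + c 4 * d 4)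
   + y3 * (c 5 * d 5 + c 6 * d 6 + c 7 * d 7)"
  by (simp add: g_met_def proj_mk Qf_mk Qf_mk_mk)

definition AA :: "nat \<Rightarrow> int" where "AA k = (if k = 1 then 1 else 0)"
definition WW :: "nat \<Rightarrow> nat \<Rightarrow> int" where
 "WW a b = (if (a,b) = (2,5) \<or> (a,b) = (3,6) \<or> (a,b) = (4,7) then 1
            else if (a,b) = (5,2) \<or> (a,b) = (6,3) \<or> (a,b) = (7,4) then -1 else 0)"
definition GG :: "(nat \<Rightarrow> nat) \<Rightarrow> int" where
 "GG p = AA (p 1) * WW (p 2) (p 3) * WW (p 4) (p 5) * WW (p 6) (p 7)"
definition zt :: "nat \<Rightarrow> (nat \<Rightarrow> nat) \<Rightarrow> bool" where
 "zt a f = ((a = 1 \<and> AA (f 1) = 0) \<or> (a = 3 \<and> WW (f 2) (f 3) = 0) \<or> (a = 5 \<and> WW (f 4) (f 5) = 0))"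

fun ps :: "nat list \<Rightarrow> (nat \<Rightarrow> nat) \<Rightarrow> int" where
  "ps [] f = GG f"
| "ps (a # xs) f = sum_list (map (\<lambda>b. if zt a (f \<circ> transpose a b) then 0 else
      (if a = b then 1 else -1) * ps xs (f \<circ> transpose a b)) (a # xs))"

lemma zt_sound:
  assumes "zt a g" "\<And>j. j \<le> a \<Longrightarrow> q j = j"
  shows "GG (g \<circ> q) = 0"
  using assms unfolding zt_def GG_def by auto

lemma ps_correct:
  "sorted_wrt (<) xs \<Longrightarrow> (\<Sum>q | q permutes set xs. sign q * GG (f \<circ> q)) = ps xs f"
proof (induction xs arbitrary: f)
  case Nil
  then show ?case by simp
next
  case (Cons a xs)
  have fin: "finite (set xs)" by simp
  have an: "a \<notin> set xs" using Cons.prems by auto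
  have sx: "sorted_wrt (<) xs" using Cons.prems by simp
  have "(\<Sum>p | p permutes set (a # xs). sign p * GG (f \<circ> p))
     = (\<Sum>b\<in>insert a (set xs). \<Sum>q | q permutes set xs. sign (transpose a b \<circ> q) * GG (f \<circ> (transpose a b \<circ> q)))"
    using sum_over_permutations_insert[OF fin an, of "\<lambda>p. sign p * GG (f \<circ> p)"] by simp
  also have "\<dots> = (\<Sum>b\<in>insert a (set xs). if zt a (f \<circ> transpose a b) then 0 else
      (if a = b then 1 else -1) * (\<Sum>q | q permutes set xs. sign q * GG ((f \<circ> transpose a b) \<circ> q)))"
  proof (rule sum.cong[OF refl])
    fix b assume "b \<in> insert a (set xs)"
    show "(\<Sum>q | q permutes set xs. sign (transpose a b \<circ> q) * GG (f \<circ> (transpose a b \<circ> q)))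
       = (if zt a (f \<circ> transpose a b) then 0 else
      (if a = b then 1 else -1) * (\<Sum>q | q permutes set xs. sign q * GG ((f \<circ> transpose a b) \<circ> q)))"
    proof (cases "zt a (f \<circ> transpose a b)")
      case True
      have "GG (f \<circ> (transpose a b \<circ> q)) = 0" if "q permutes set xs" for q
      proof -
        have "q j = j" if "j \<le> a" for j
        proof -
          have "j \<notin> set xs" using Cons.prems that by auto
          then show ?thesis using \<open>q permutes set xs\<close> by (simp add: permutes_not_in)
        qed
        then show ?thesis using zt_sound[OF True] by (simp add: o_assoc)
      qed
      then show ?thesis using True by simp
    next
      case False
      show ?thesis unfolding sum_distrib_left if_not_P[OF False]
      proof (intro sum.cong[OF refl])
        fix q assume "q \<in> {q. q permutes set xs}"
        then have "permutation q" using fin permutation_permutes by blast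
        then show "sign (transpose a b \<circ> q) * GG (f \<circ> (transpose a b \<circ> q)) = (if a = b then 1 else -1) * (sign q * GG ((f \<circ> transpose a b) \<circ> q))"
          by (simp add: sign_compose permutation_swap_id sign_swap_id o_assoc)
      qed
    qed
  qed
  also have "\<dots> = (\<Sum>b\<in>set (a # xs). if zt a (f \<circ> transpose a b) then 0 else
      (if a = b then 1 else -1) * ps xs (f \<circ> transpose a b))"
    using Cons.IH[OF sx] by (simp only: list.set)
  also have "\<dots> = sum_list (map (\<lambda>b. if zt a (f \<circ> transpose a b) then 0 else
      (if a = b then 1 else -1) * ps xs (f \<circ> transpose a b)) (a # xs))"
    using Cons.prems by (intro sum_list_distinct_conv_sum_set[symmetric]) (use an in \<open>simp add: strict_sorted_iff\<close>)
  also have "\<dots> = ps (a # xs) f" by (simp only: ps.simps)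
  finally show ?case .
qed


lemma ps_val: "ps [1,2,3,4,5,6,7] id = -48"
  by (simp add: zt_def AA_def WW_def GG_def transpose_def)

lemma perm_sum_val: "(\<Sum>p | p permutes {1..7::nat}. sign p * GG p) = -48"
proof -
  have st: "set [1,2,3,4,5,6,7::nat] = {1..7}" by auto
  have "(\<Sum>p | p permutes {1..7::nat}. sign p * GG p) = (\<Sum>p | p permutes set [1,2,3,4,5,6,7::nat]. sign p * GG (id \<circ> p))"
    unfolding st by simp
  also have "\<dots> = ps [1,2,3,4,5,6,7] id" by (rule ps_correct) simp
  also have "\<dots> = -48" by (rule ps_val)
  finally show ?thesis .
qed

definition dl :: "nat \<Rightarrow> nat \<Rightarrow> real" where "dl i = (\<lambda>l. if l = i then 1 else 0)"

lemma WW_brc: "- brc (dl a) (dl b) 1 = of_int (WW a b)"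
  unfolding brc_def WW_def dl_def by auto

lemma AA_dl: "dl j 1 = of_int (AA j)"
  unfolding AA_def dl_def by auto



definition phic1 :: "(nat \<Rightarrow> real) \<Rightarrow> nat \<Rightarrow> real" where
  "phic1 c k = (if k \<in> {2,3,4} then c (k + 3) else if k \<in> {5,6,7} then - c (k - 3) else 0)"

theorem theorem2p9:
  fixes y1 y2 y3 :: real
  assumes "y1 > 0" and "y2 > 0" and "y3 > 0" and "y1 = 4 * y2 * y3"
  shows "contact_metric m_space brm (eta_V y1 y2 y3) (xi_V y1 y2 y3)
            (g_met y1 y2 y3) (Phi_V y1 y2 y3)
       \<and> (sasakian m_space brm (eta_V y1 y2 y3) (xi_V y1 y2 y3)
            (g_met y1 y2 y3) (Phi_V y1 y2 y3)
          \<longleftrightarrow> y1 = 4 * y2 ^ 2 \<and> y2 = y3)"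
proof -
  define a where "a = sqrt y2"
  define b where "b = sqrt y3"
  have a0: "a > 0" and b0: "b > 0" using assms by (simp_all add: a_def b_def)
  have y2: "y2 = a^2" and y3: "y3 = b^2" using assms by (simp_all add: a_def b_def)
  have y1: "y1 = 4 * a^2 * b^2" using assms y2 y3 by simp
  have sy1: "sqrt y1 = 2 * a * b"
  proof -
    have "sqrt y1 = sqrt ((2 * a * b)^2)" using y1 by (simp add: power_mult_distrib)
    also have "\<dots> = 2 * a * b" using a0 b0 by simp
    finally show ?thesis .
  qed
  let ?eta = "eta_V y1 y2 y3" and ?xi = "xi_V y1 y2 y3" and ?g = "g_met y1 y2 y3"
    and ?Phi = "Phi_V y1 y2 y3"
  have Phi: "?Phi (mk c) = mk (phic a b c)" for c
    by (simp add: Phi_mk a_def b_def)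
  have eta: "?eta (mk c) = 2 * a * b * c 1" for c
    by (simp add: eta_mk sy1)
  have xi: "?xi = mk (\<lambda>k. if k = 1 then 1 / (2 * a * b) else 0)"
    unfolding xi_mk sy1 by (rule refl)
  have g: "?g (mk c) (mk d) = 4 * a^2 * b^2 * (c 1 * d 1) + a^2 * (c 2 * d 2 + c 3 * d 3 + c 4 * d 4)
      + b^2 * (c 5 * d 5 + c 6 * d 6 + c 7 * d 7)" for c d
    by (simp add: g_mk y1 y2 y3)
  have dform: "d_form brm ?eta (mk c) (mk d) = - (2 * a * b * brc c d 1)" for c d
    by (simp add: d_form_def brm_mk eta)
  have M: "m_space = range mk" by (rule m_space_mk)
  have ab: "a \<noteq> 0" "b \<noteq> 0" using a0 b0 by auto

  have C1: "\<exists>v. (\<forall>i. v i \<in> m_space) \<and> eta_wedge_deta3 brm ?eta v \<noteq> 0"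
  proof (intro exI conjI)
    let ?v = "\<lambda>i. mk (dl i)"
    show "\<forall>i. ?v i \<in> m_space" using M by auto
    have e1: "?eta (?v j) = 2 * a * b * of_int (AA j)" for j
      by (simp add: eta AA_dl)
    have e2: "d_form brm ?eta (?v x) (?v y) = 2 * a * b * of_int (WW x y)" for x y
      by (simp add: dform flip: WW_brc)
    have "eta_wedge_deta3 brm ?eta ?v = (\<Sum>p | p permutes {1..7}. (2 * a * b)^4 * of_int (sign p * GG p))"
      unfolding eta_wedge_deta3_def
      by (intro sum.cong refl) (simp add: e1 e2 GG_def power4_eq_xxxx algebra_simps)
    also have "\<dots> = (2 * a * b)^4 * of_int (\<Sum>p | p permutes {1..7::nat}. sign p * GG p)"
      by (simp add: sum_distrib_left)
    also have "\<dots> = (2 * a * b)^4 * (-48)" by (simp add: perm_sum_val)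
    finally show "eta_wedge_deta3 brm ?eta ?v \<noteq> 0" using ab by simp
  qed
  have C2: "?xi \<in> m_space" using M xi by auto
  have C3: "?eta ?xi = 1" using ab by (simp add: xi eta)
  have C4: "\<forall>X\<in>m_space. ?Phi X \<in> m_space \<and> ?Phi (?Phi X) = madd (msc (-1) X) (msc (?eta X) ?xi)"
  proof
    fix X assume "X \<in> m_space"
    then obtain c where X: "X = mk c" using M by auto
    show "?Phi X \<in> m_space \<and> ?Phi (?Phi X) = madd (msc (-1) X) (msc (?eta X) ?xi)"
    proof
      show "?Phi X \<in> m_space" using M X Phi by auto
      have "?Phi (?Phi X) = mk (phic a b (phic a b c))" using X Phi by simp
      also have "\<dots> = mk (\<lambda>k. -1 * c k + (2 * a * b * c 1) * (if k = 1 then 1 / (2 * a * b) else 0))"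
        by (intro mk_cong, drule k17, elim disjE) (use ab in \<open>simp_all add: phic_def\<close>)
      also have "\<dots> = madd (msc (-1) X) (msc (?eta X) ?xi)"
        by (simp add: X xi eta msc_mk madd_mk)
      finally show "?Phi (?Phi X) = madd (msc (-1) X) (msc (?eta X) ?xi)" .
    qed
  qed
  have C5: "\<forall>X\<in>m_space. \<forall>Y\<in>m_space. ?g (?Phi X) (?Phi Y) = ?g X Y - ?eta X * ?eta Y"
  proof (intro ballI)
    fix X Y assume XY: "X \<in> m_space" "Y \<in> m_space"
    obtain c where X: "X = mk c" using XY(1) unfolding M by blast
    obtain d where Y: "Y = mk d" using XY(2) unfolding M by blast
    show "?g (?Phi X) (?Phi Y) = ?g X Y - ?eta X * ?eta Y"
      using ab by (simp add: X Y Phi g eta phic_def field_simps power2_eq_square)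
  qed
  have C6: "\<forall>X\<in>m_space. \<forall>Y\<in>m_space. d_form brm ?eta X Y = 2 * ?g X (?Phi Y)"
  proof (intro ballI)
    fix X Y assume XY: "X \<in> m_space" "Y \<in> m_space"
    obtain c where X: "X = mk c" using XY(1) unfolding M by blast
    obtain d where Y: "Y = mk d" using XY(2) unfolding M by blast
    show "d_form brm ?eta X Y = 2 * ?g X (?Phi Y)"
      using ab by (simp add: X Y Phi g dform brc_def phic_def field_simps power2_eq_square)
  qed
  have CM: "contact_metric m_space brm ?eta ?xi ?g ?Phi"
    unfolding contact_metric_def using C1 C2 C3 C4 C5 C6 by blast

  have Nmk: "nijenhuis brm ?Phi (mk c) (mk d) = mk (\<lambda>k. brc (phic a b c) (phic a b d) k
      + phic a b (phic a b (brc c d)) k - phic a b (brc (phic a b c) d) k - phic a b (brc c (phic a b d)) k)" for c d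
    by (simp add: nijenhuis_def Phi brm_mk madd_mk msub_mk)
  have Rmk: "msc (- d_form brm ?eta (mk c) (mk d)) ?xi = mk (\<lambda>k. (2 * a * b * brc c d 1) * (if k = 1 then 1 / (2 * a * b) else 0))" for c d
    by (simp add: dform xi msc_mk)

  have NS: "normal_structure m_space brm ?eta ?xi ?Phi \<longleftrightarrow> a = b"
  proof
    assume "normal_structure m_space brm ?eta ?xi ?Phi"
    then have "nijenhuis brm ?Phi (mk (dl 1)) (mk (dl 2)) = msc (- d_form brm ?eta (mk (dl 1)) (mk (dl 2))) ?xi"
      unfolding normal_structure_def M by blast
    then have "\<forall>k\<in>{1..7}. brc (phic a b (dl 1)) (phic a b (dl 2)) k
      + phic a b (phic a b (brc (dl 1) (dl 2))) k - phic a b (brc (phic a b (dl 1)) (dl 2)) k - phic a b (brc (dl 1) (phic a b (dl 2))) k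
      = (2 * a * b * brc (dl 1) (dl 2) 1) * (if k = 1 then 1 / (2 * a * b) else 0)"
      unfolding Nmk Rmk mk_eq_iff .
    then have h5: "brc (phic a b (dl 1)) (phic a b (dl 2)) 5
      + phic a b (phic a b (brc (dl 1) (dl 2))) 5 - phic a b (brc (phic a b (dl 1)) (dl 2)) 5 - phic a b (brc (dl 1) (phic a b (dl 2))) 5
      = (2 * a * b * brc (dl 1) (dl 2) 1) * (if (5::nat) = 1 then 1 / (2 * a * b) else 0)"
      by (rule bspec) simp
    have p1: "phic a b (dl 1) = (\<lambda>k. 0)" by (rule ext) (simp add: phic_def dl_def)
    have v1: "brc (phic a b (dl 1)) (phic a b (dl 2)) 5 = 0" unfolding p1 by (simp add: brc_def)
    have v3: "phic a b (brc (phic a b (dl 1)) (dl 2)) 5 = 0" unfolding p1 by (simp add: brc_def phic_def)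
    have v2: "phic a b (phic a b (brc (dl 1) (dl 2))) 5 = 1" using ab by (simp add: brc_def phic_def dl_def)
    have v4: "phic a b (brc (dl 1) (phic a b (dl 2))) 5 = a^2 / b^2"
      by (simp add: brc_def phic_def dl_def power2_eq_square)
    have "1 - a^2 / b^2 = 0" using h5 ab unfolding v1 v2 v3 v4 by simp
    then have "a^2 = b^2" using ab by (simp add: field_simps)
    then show "a = b" using a0 b0 by (simp add: power2_eq_iff)
  next
    assume ab_eq: "a = b"
    show "normal_structure m_space brm ?eta ?xi ?Phi"
      unfolding normal_structure_def M
    proof (intro ballI)
      fix X Y assume "X \<in> range mk" "Y \<in> range mk"
      then obtain c d where X: "X = mk c" and Y: "Y = mk d" by auto
      have P1: "phic a b e = phic1 e" for e
      proof -
        have bb: "b / b = 1" using ab by simp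
        show ?thesis unfolding phic_def phic1_def ab_eq bb mult_1 mult_minus1 by (rule refl)
      qed
      have R1: "(2 * a * b * brc c d 1) * (if k = 1 then 1 / (2 * a * b) else 0) = (if k = 1 then brc c d 1 else 0)" for k
        using ab by simp
      show "nijenhuis brm ?Phi X Y = msc (- d_form brm ?eta X Y) ?xi"
        unfolding X Y Nmk Rmk P1 R1
        by (intro mk_cong, drule k17, elim disjE) (simp_all add: brc_def phic1_def algebra_simps)
    qed
  qed
  have "y1 = 4 * y2 ^ 2 \<and> y2 = y3 \<longleftrightarrow> a = b"
  proof
    assume "y1 = 4 * y2 ^ 2 \<and> y2 = y3"
    then show "a = b" unfolding a_def b_def by simp
  next
    assume "a = b"
    then have "y2 = y3" using y2 y3 by simp
    then show "y1 = 4 * y2 ^ 2 \<and> y2 = y3" using assms(4) by (simp add: power2_eq_square)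
  qed
  then show ?thesis using CM NS unfolding sasakian_def by blast
qed

end
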